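(* Let $M=\mathrm{Mon}\langle \Sigma \mid R\rangle$ be a finitely presented monoid and let $\mathfrak{R}$ be a rewriting system for $M$ that is complete and cyclically complete. Let $u,v\in\Sigma^*$. If $u=_M v$, then $\rho(u)\simeq\rho(v)$.
   Context: $\Sigma^*$ is the free monoid on the alphabet $\Sigma$; $=_M$ is equality in $M$. A rewriting system $\mathfrak{R}$ is a set of rules $l\to r$ with $l,r\in\Sigma^*$; $plq\to prq$ is one rewriting step. $\mathfrak{R}$ is complete for $M$ if it is terminating, confluent, and the congruence it generates on $\Sigma^*$ is $=_M$. $u\simeq v$ means $u=ab$, $v=ba$ for some words $a,b$ (cyclic conjugates in $\Sigma^*$). $u\rightsquigarrow v$ means some cyclic conjugate $\tilde u$ of $u$ (possibly $u$) satisfies $\tilde u\to v$; $\rightsquigarrow^*$ is its reflexive–transitive closure. $\mathfrak{R}$ is cyclically terminating if there is no infinite sequence $u_1\rightsquigarrow u_2\rightsquigarrow\cdots$; cyclically confluent if whenever $w\rightsquigarrow^* u$ and $w\rightsquigarrow^* v$ there exist $z\simeq z'$ with $u\rightsquigarrow^* z$ and $v\rightsquigarrow^* z'$; cyclically complete if both. A word is cyclically irreducible if it and all its cyclic conjugates are irreducible modulo $\mathfrak{R}$. $\rho(u)$ denotes a cyclically irreducible form of $u$, i.e. a cyclically irreducible word $w$ with $u\rightsquigarrow^* w$; when $\mathfrak{R}$ is cyclically complete, every word has such a form, unique up to $\simeq$. *)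

theory Defs
  imports Main
begin

type_synonym 'a rules = "('a list \<times> 'a list) set"

definition rstep :: "'a rules \<Rightarrow> 'a list \<Rightarrow> 'a list \<Rightarrow> bool" where
  "rstep Rs x y \<longleftrightarrow> (\<exists>p q l r. (l, r) \<in> Rs \<and> x = p @ l @ q \<and> y = p @ r @ q)"

definition cyc_conj :: "'a list \<Rightarrow> 'a list \<Rightarrow> bool" where
  "cyc_conj u v \<longleftrightarrow> (\<exists>a b. u = a @ b \<and> v = b @ a)"

definition cstep :: "'a rules \<Rightarrow> 'a list \<Rightarrow> 'a list \<Rightarrow> bool" where
  "cstep Rs u v \<longleftrightarrow> (\<exists>u'. cyc_conj u u' \<and> rstep Rs u' v)"

definition cong_gen :: "'a rules \<Rightarrow> 'a list \<Rightarrow> 'a list \<Rightarrow> bool" where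
  "cong_gen Rs = (symclp (rstep Rs))\<^sup>*\<^sup>*"

definition terminating :: "'a rules \<Rightarrow> bool" where
  "terminating Rs \<longleftrightarrow> \<not> (\<exists>f. \<forall>i. rstep Rs (f i) (f (Suc i)))"

definition confluent :: "'a rules \<Rightarrow> bool" where
  "confluent Rs \<longleftrightarrow> (\<forall>w u v. (rstep Rs)\<^sup>*\<^sup>* w u \<and> (rstep Rs)\<^sup>*\<^sup>* w v \<longrightarrow>
      (\<exists>z. (rstep Rs)\<^sup>*\<^sup>* u z \<and> (rstep Rs)\<^sup>*\<^sup>* v z))"

definition complete_for :: "'a rules \<Rightarrow> 'a rules \<Rightarrow> bool" where
  "complete_for Rs Rel \<longleftrightarrow> terminating Rs \<and> confluent Rs \<and> cong_gen Rs = cong_gen Rel"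

definition cyc_terminating :: "'a rules \<Rightarrow> bool" where
  "cyc_terminating Rs \<longleftrightarrow> \<not> (\<exists>f. \<forall>i. cstep Rs (f i) (f (Suc i)))"

definition cyc_confluent :: "'a rules \<Rightarrow> bool" where
  "cyc_confluent Rs \<longleftrightarrow> (\<forall>w u v. (cstep Rs)\<^sup>*\<^sup>* w u \<and> (cstep Rs)\<^sup>*\<^sup>* w v \<longrightarrow>
      (\<exists>z z'. cyc_conj z z' \<and> (cstep Rs)\<^sup>*\<^sup>* u z \<and> (cstep Rs)\<^sup>*\<^sup>* v z'))"

definition cyc_complete :: "'a rules \<Rightarrow> bool" where
  "cyc_complete Rs \<longleftrightarrow> cyc_terminating Rs \<and> cyc_confluent Rs"

definition irreducible :: "'a rules \<Rightarrow> 'a list \<Rightarrow> bool" where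
  "irreducible Rs w \<longleftrightarrow> \<not> (\<exists>y. rstep Rs w y)"

definition cyc_irreducible :: "'a rules \<Rightarrow> 'a list \<Rightarrow> bool" where
  "cyc_irreducible Rs w \<longleftrightarrow> (\<forall>w'. cyc_conj w w' \<longrightarrow> irreducible Rs w')"

definition is_rho :: "'a rules \<Rightarrow> 'a list \<Rightarrow> 'a list \<Rightarrow> bool" where
  "is_rho Rs u w \<longleftrightarrow> cyc_irreducible Rs w \<and> (cstep Rs)\<^sup>*\<^sup>* u w"

end

theory Submission
  imports Defs
begin

lemma cyc_conj_rotate: "cyc_conj u v \<longleftrightarrow> (\<exists>n. v = rotate n u)"
proof
  assume "cyc_conj u v"
  then obtain a b where "u = a @ b" "v = b @ a" by (auto simp: cyc_conj_def)
  then show "\<exists>n. v = rotate n u" by (metis rotate_append)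
next
  assume "\<exists>n. v = rotate n u"
  then obtain n where "v = rotate n u" by blast
  then show "cyc_conj u v" unfolding cyc_conj_def
    by (metis append_take_drop_id rotate_drop_take)
qed

lemma cyc_conj_trans: "cyc_conj a b \<Longrightarrow> cyc_conj b c \<Longrightarrow> cyc_conj a c"
  by (metis cyc_conj_rotate rotate_rotate)

lemma cyc_conj_sym: "cyc_conj a b \<Longrightarrow> cyc_conj b a"
  by (auto simp: cyc_conj_def)

lemma cyc_conj_refl: "cyc_conj a a"
  unfolding cyc_conj_def by (rule exI[of _ "[]"]) simp

lemma rstep_cstep: "(rstep Rs)\<^sup>*\<^sup>* x y \<Longrightarrow> (cstep Rs)\<^sup>*\<^sup>* x y"
proof (induction rule: rtranclp_induct)
  case base then show ?case by simp
next
  case (step y z)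
  have "cstep Rs y z" using step(2) cyc_conj_refl unfolding cstep_def by blast
  then show ?case using step(3) by simp
qed

lemma cyc_irr_stuck:
  assumes "cyc_irreducible Rs w" "(cstep Rs)\<^sup>*\<^sup>* w z" shows "z = w"
  using assms(2)
proof (cases rule: converse_rtranclpE)
  case (step y)
  then show ?thesis using assms(1)
    unfolding cstep_def cyc_irreducible_def irreducible_def by blast
qed simp

lemma cyc_irr_conj: "cyc_irreducible Rs w \<Longrightarrow> cyc_conj w z \<Longrightarrow> cyc_irreducible Rs z"
  unfolding cyc_irreducible_def by (meson cyc_conj_trans)

lemma church_rosser:
  assumes "confluent Rs" "(symclp (rstep Rs))\<^sup>*\<^sup>* u v"
  shows "\<exists>z. (rstep Rs)\<^sup>*\<^sup>* u z \<and> (rstep Rs)\<^sup>*\<^sup>* v z"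
  using assms(2)
proof (induction rule: rtranclp_induct)
  case base then show ?case by blast
next
  case (step x y)
  then obtain z where z: "(rstep Rs)\<^sup>*\<^sup>* u z" "(rstep Rs)\<^sup>*\<^sup>* x z" by blast
  from step(2) show ?case
  proof (cases rule: symclpE)
    case base
    then have "(rstep Rs)\<^sup>*\<^sup>* x y" by simp
    with z(2) assms(1) obtain z' where "(rstep Rs)\<^sup>*\<^sup>* z z'" "(rstep Rs)\<^sup>*\<^sup>* y z'"
      unfolding confluent_def by blast
    then show ?thesis using z(1) by (meson rtranclp_trans)
  next
    case sym
    then show ?thesis using z by (meson converse_rtranclp_into_rtranclp)
  qed
qed

lemma rho_conj:
  assumes "cyc_confluent Rs" "is_rho Rs u w" "(cstep Rs)\<^sup>*\<^sup>* u n"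
  shows "\<exists>z'. (cstep Rs)\<^sup>*\<^sup>* n z' \<and> cyc_conj w z'"
proof -
  from assms obtain z z' where "cyc_conj z z'" "(cstep Rs)\<^sup>*\<^sup>* w z" "(cstep Rs)\<^sup>*\<^sup>* n z'"
    unfolding cyc_confluent_def is_rho_def by blast
  moreover have "z = w" using calculation(2) assms(2) cyc_irr_stuck unfolding is_rho_def by blast
  ultimately show ?thesis by blast
qed

theorem lemma3p2:
  fixes Sigma :: "'a set" and Rel Rs :: "'a rules" and u v w w' :: "'a list"
  assumes "finite Sigma" and "finite Rel" and "Rel \<subseteq> lists Sigma \<times> lists Sigma"
    and "Rs \<subseteq> lists Sigma \<times> lists Sigma"
    and "complete_for Rs Rel" and "cyc_complete Rs"
    and "u \<in> lists Sigma" and "v \<in> lists Sigma"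
    and "cong_gen Rel u v"
    and "is_rho Rs u w" and "is_rho Rs v w'"
  shows "cyc_conj w w'"
proof -
  have cc: "cyc_confluent Rs" using assms(6) unfolding cyc_complete_def by blast
  have "cong_gen Rs u v" using assms(5,9) unfolding complete_for_def by simp
  then obtain n where n: "(rstep Rs)\<^sup>*\<^sup>* u n" "(rstep Rs)\<^sup>*\<^sup>* v n"
    using church_rosser assms(5) unfolding complete_for_def cong_gen_def by blast
  obtain z1 where z1: "(cstep Rs)\<^sup>*\<^sup>* n z1" "cyc_conj w z1"
    using rho_conj[OF cc assms(10) rstep_cstep[OF n(1)]] by blast
  obtain z2 where z2: "(cstep Rs)\<^sup>*\<^sup>* n z2" "cyc_conj w' z2"
    using rho_conj[OF cc assms(11) rstep_cstep[OF n(2)]] by blast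
  have i1: "cyc_irreducible Rs z1" using cyc_irr_conj z1(2) assms(10) unfolding is_rho_def by blast
  have i2: "cyc_irreducible Rs z2" using cyc_irr_conj z2(2) assms(11) unfolding is_rho_def by blast
  obtain y y' where "cyc_conj y y'" "(cstep Rs)\<^sup>*\<^sup>* z1 y" "(cstep Rs)\<^sup>*\<^sup>* z2 y'"
    using cc z1(1) z2(1) unfolding cyc_confluent_def by blast
  then have "cyc_conj z1 z2" using cyc_irr_stuck i1 i2 by metis
  then show ?thesis using z1(2) z2(2) cyc_conj_trans cyc_conj_sym by metis
qed

end
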